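(* Let $(\Omega,\Sigma,\mathbb{P}_0)$ be a probability space, $\mathbb{L}^2=\mathbb{L}^2(\Omega,\Sigma,\mathbb{P}_0)$, and $n\ge 1$ an integer. The functional $\mathrm{MAXVAR}_n:\mathbb{L}^2\to\mathbb{R}$, $\mathrm{MAXVAR}_n(X)=\mathbb{E}(\max\{X_1,\dots,X_n\})$ where $X_1,\dots,X_n$ are i.i.d. copies of $X$, is a coherent risk measure in the basic sense, i.e. it satisfies: (A1) $\mathrm{MAXVAR}_n(C)=C$ for every constant $C$; (A2) $\mathrm{MAXVAR}_n(\lambda X+(1-\lambda)Y)\le \lambda\,\mathrm{MAXVAR}_n(X)+(1-\lambda)\,\mathrm{MAXVAR}_n(Y)$ for all $X,Y\in\mathbb{L}^2$ and $\lambda\in[0,1]$; (A3) $\mathrm{MAXVAR}_n(X)\le\mathrm{MAXVAR}_n(Y)$ whenever $X,Y\in\mathbb{L}^2$ and $X\le Y$; (A4) if $\|X^k-X\|_2\to0$ and $\mathrm{MAXVAR}_n(X^k)\le 0$ for all $k\in\mathbb{N}$, then $\mathrm{MAXVAR}_n(X)\le0$; (A5) $\mathrm{MAXVAR}_n(\lambda X)=\lambda\,\mathrm{MAXVAR}_n(X)$ for all $\lambda>0$ and $X\in\mathbb{L}^2$.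
   Context: $\mathbb{L}^2$ is the space of square-integrable random variables on $(\Omega,\Sigma,\mathbb{P}_0)$ with norm $\|\cdot\|_2$. "i.i.d. copies of $X$" means independent random variables each having the same distribution as $X$; the value $\mathbb{E}(\max\{X_1,\dots,X_n\})$ depends only on the distribution of $X$, so $\mathrm{MAXVAR}_n$ is well defined (and finite on $\mathbb{L}^2$). *)

theory Defs
  imports "HOL-Probability.Probability"
begin

definition L2 :: "'a measure \<Rightarrow> ('a \<Rightarrow> real) set" where
  "L2 M = {X. X \<in> borel_measurable M \<and> integrable M (\<lambda>\<omega>. (X \<omega>)\<^sup>2)}"

definition L2_norm :: "'a measure \<Rightarrow> ('a \<Rightarrow> real) \<Rightarrow> real" where
  "L2_norm M X = sqrt (\<integral>\<omega>. (X \<omega>)\<^sup>2 \<partial>M)"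

text \<open>MAXVAR_n(X) = E(max{X_1,...,X_n}) with X_1..X_n i.i.d. copies of X:
  the joint law of n i.i.d. copies is the n-fold product of the law of X.\<close>
definition maxvar :: "nat \<Rightarrow> 'a measure \<Rightarrow> ('a \<Rightarrow> real) \<Rightarrow> real" where
  "maxvar n M X = (\<integral>x. Max (x ` {..<n}) \<partial>(PiM {..<n} (\<lambda>_. distr M borel X)))"

end

theory Submission
  imports Defs
begin

lemma maxvar_eq:
  assumes M: "prob_space M" and X[measurable]: "X \<in> borel_measurable M"
  shows "maxvar n M X = (\<integral>\<omega>. Max ((\<lambda>i. X (\<omega> i)) ` {..<n}) \<partial>(PiM {..<n} (\<lambda>_. M)))"
proof -
  define D where "D = distr M borel X"
  have pD: "prob_space D" unfolding D_def by (intro prob_space.prob_space_distr M X)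
  have sD: "sets D = sets borel" unfolding D_def by simp
  have XD[measurable]: "X \<in> measurable M D" unfolding D_def by simp
  have dD: "distr M D X = D"
    by (rule measure_eqI) (simp_all add: D_def emeasure_distr)
  have eq: "distr (PiM {..<n} (\<lambda>_. M)) (PiM {..<n} (\<lambda>_. D)) (compose {..<n} X)
      = PiM {..<n} (\<lambda>_. D)"
    using distr_PiM_finite_prob_space'[of "{..<n}" "\<lambda>_. M" "\<lambda>_. D" X] M pD XD dD
    by simp
  have gm: "(\<lambda>x. Max ((\<lambda>i. x i) ` {..<n})) \<in> borel_measurable (PiM {..<n} (\<lambda>_. D))"
  proof (intro borel_measurable_Max)
    fix i assume "i \<in> {..<n}"
    then have "(\<lambda>x. x i) \<in> measurable (PiM {..<n} (\<lambda>_. D)) D"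
      by (intro measurable_component_singleton) simp
    then show "(\<lambda>x. x i) \<in> borel_measurable (PiM {..<n} (\<lambda>_. D))"
      using measurable_cong_sets[OF refl sD, of "PiM {..<n} (\<lambda>_. D)"] by blast
  qed simp
  have cm: "compose {..<n} X \<in> measurable (PiM {..<n} (\<lambda>_. M)) (PiM {..<n} (\<lambda>_. D))"
    unfolding compose_def by measurable
  have "maxvar n M X = (\<integral>x. Max (x ` {..<n}) \<partial>(PiM {..<n} (\<lambda>_. D)))"
    unfolding maxvar_def D_def by simp
  also have "\<dots> = (\<integral>x. Max (x ` {..<n}) \<partial>(distr (PiM {..<n} (\<lambda>_. M)) (PiM {..<n} (\<lambda>_. D)) (compose {..<n} X)))"
    by (simp add: eq)
  also have "\<dots> = (\<integral>\<omega>. Max ((compose {..<n} X \<omega>) ` {..<n}) \<partial>(PiM {..<n} (\<lambda>_. M)))"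
    using integral_distr[OF cm, of "\<lambda>x. Max (x ` {..<n})"] gm by simp
  also have "\<dots> = (\<integral>\<omega>. Max ((\<lambda>i. X (\<omega> i)) ` {..<n}) \<partial>(PiM {..<n} (\<lambda>_. M)))"
    by (intro Bochner_Integration.integral_cong refl arg_cong[where f=Max] image_cong) (auto simp: compose_def)
  finally show ?thesis .
qed

lemma comp_meas:
  fixes n :: nat
  assumes "i < n" and "X \<in> borel_measurable M"
  shows "(\<lambda>\<omega>. X (\<omega> i)) \<in> borel_measurable (PiM {..<n} (\<lambda>_. M))"
  using measurable_compose[OF measurable_component_singleton[of i "{..<n}" "\<lambda>_. M"] assms(2)] assms(1)
  by simp

lemma comp_int:
  fixes h :: "'a \<Rightarrow> real" and n :: nat
  assumes M: "prob_space M" and i: "i < n" and h[measurable]: "h \<in> borel_measurable M"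
  shows "integrable (PiM {..<n} (\<lambda>_. M)) (\<lambda>\<omega>. h (\<omega> i)) = integrable M h"
    and "integral\<^sup>L (PiM {..<n} (\<lambda>_. M)) (\<lambda>\<omega>. h (\<omega> i)) = integral\<^sup>L M h"
proof -
  have d: "distr (PiM {..<n} (\<lambda>_. M)) M (\<lambda>\<omega>. \<omega> i) = M"
    using distr_PiM_component[of "{..<n}" "\<lambda>_. M" i] M i by simp
  have c: "(\<lambda>\<omega>. \<omega> i) \<in> measurable (PiM {..<n} (\<lambda>_. M)) M"
    using measurable_component_singleton[of i "{..<n}" "\<lambda>_. M"] i by simp
  show "integrable (PiM {..<n} (\<lambda>_. M)) (\<lambda>\<omega>. h (\<omega> i)) = integrable M h"
    using integrable_distr_eq[OF c h] d by simp
  show "integral\<^sup>L (PiM {..<n} (\<lambda>_. M)) (\<lambda>\<omega>. h (\<omega> i)) = integral\<^sup>L M h"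
    using integral_distr[OF c h] d by simp
qed

lemma max_abs_le_sum:
  fixes a :: "nat \<Rightarrow> real"
  assumes "finite I" "I \<noteq> {}"
  shows "\<bar>Max (a ` I)\<bar> \<le> (\<Sum>i\<in>I. \<bar>a i\<bar>)"
proof -
  have "Max (a ` I) \<in> a ` I" by (rule Max_in) (use assms in auto)
  then obtain j where j: "j \<in> I" "Max (a ` I) = a j" by auto
  have "\<bar>a j\<bar> \<le> (\<Sum>i\<in>I. \<bar>a i\<bar>)" by (rule member_le_sum) (use assms j in auto)
  then show ?thesis using j by simp
qed

lemma max_int:
  fixes X :: "'a \<Rightarrow> real" and n :: nat
  assumes M: "prob_space M" and n: "n \<ge> 1" and X[measurable]: "X \<in> borel_measurable M"
    and iX: "integrable M X"
  shows "integrable (PiM {..<n} (\<lambda>_. M)) (\<lambda>\<omega>. Max ((\<lambda>i. X (\<omega> i)) ` {..<n}))"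
proof (rule Bochner_Integration.integrable_bound)
  show "integrable (PiM {..<n} (\<lambda>_. M)) (\<lambda>\<omega>. \<Sum>i<n. \<bar>X (\<omega> i)\<bar>)"
  proof (rule Bochner_Integration.integrable_sum)
    fix i assume "i \<in> {..<n}"
    then show "integrable (PiM {..<n} (\<lambda>_. M)) (\<lambda>\<omega>. \<bar>X (\<omega> i)\<bar>)"
      using comp_int(1)[OF M, of i n "\<lambda>x. \<bar>X x\<bar>"] iX by auto
  qed
  show "(\<lambda>\<omega>. Max ((\<lambda>i. X (\<omega> i)) ` {..<n})) \<in> borel_measurable (PiM {..<n} (\<lambda>_. M))"
    by (intro borel_measurable_Max) (auto intro: comp_meas)
  show "AE \<omega> in PiM {..<n} (\<lambda>_. M). norm (Max ((\<lambda>i. X (\<omega> i)) ` {..<n})) \<le> norm (\<Sum>i<n. \<bar>X (\<omega> i)\<bar>)"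
  proof (intro AE_I2)
    fix \<omega>
    have "\<bar>Max ((\<lambda>i. X (\<omega> i)) ` {..<n})\<bar> \<le> (\<Sum>i<n. \<bar>X (\<omega> i)\<bar>)"
      using max_abs_le_sum[of "{..<n}" "\<lambda>i. X (\<omega> i)"] n by (simp add: lessThan_empty_iff)
    moreover have "0 \<le> (\<Sum>i<n. \<bar>X (\<omega> i)\<bar>)" by (intro sum_nonneg) auto
    ultimately show "norm (Max ((\<lambda>i. X (\<omega> i)) ` {..<n})) \<le> norm (\<Sum>i<n. \<bar>X (\<omega> i)\<bar>)"
      by simp
  qed
qed

lemma max_conv:
  fixes a b :: "nat \<Rightarrow> real"
  assumes "finite I" "I \<noteq> {}" "0 \<le> t" "t \<le> 1"
  shows "Max ((\<lambda>i. t * a i + (1 - t) * b i) ` I) \<le> t * Max (a ` I) + (1 - t) * Max (b ` I)"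
proof -
  have "t * a i + (1 - t) * b i \<le> t * Max (a ` I) + (1 - t) * Max (b ` I)" if "i \<in> I" for i
  proof -
    have "a i \<le> Max (a ` I)" "b i \<le> Max (b ` I)" using that assms by auto
    then show ?thesis using assms by (intro add_mono mult_left_mono) auto
  qed
  then show ?thesis using assms by (subst Max_le_iff) auto
qed

lemma max_mono':
  fixes a b :: "nat \<Rightarrow> real"
  assumes "finite I" "I \<noteq> {}" "\<And>i. i \<in> I \<Longrightarrow> a i \<le> b i"
  shows "Max (a ` I) \<le> Max (b ` I)"
proof -
  have "a i \<le> Max (b ` I)" if "i \<in> I" for i
  proof -
    have "b i \<le> Max (b ` I)" by (rule Max_ge) (use assms that in auto)
    then show ?thesis using assms(3)[OF that] by linarith
  qed
  then show ?thesis using assms by (subst Max_le_iff) auto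
qed

lemma max_diff:
  fixes a b :: "nat \<Rightarrow> real"
  assumes "finite I" "I \<noteq> {}"
  shows "Max (a ` I) - Max (b ` I) \<le> (\<Sum>i\<in>I. \<bar>b i - a i\<bar>)"
proof -
  have "Max (a ` I) \<in> a ` I" by (rule Max_in) (use assms in auto)
  then obtain j where j: "j \<in> I" "Max (a ` I) = a j" by auto
  have "b j \<le> Max (b ` I)" using j assms by auto
  moreover have "\<bar>b j - a j\<bar> \<le> (\<Sum>i\<in>I. \<bar>b i - a i\<bar>)" by (rule member_le_sum) (use assms j in auto)
  ultimately show ?thesis using j by simp
qed

lemma abs_le_sqrt:
  fixes Z :: "'a \<Rightarrow> real"
  assumes M: "prob_space M" and Z[measurable]: "Z \<in> borel_measurable M"
    and Z2: "integrable M (\<lambda>x. (Z x)\<^sup>2)"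
  shows "(\<integral>x. \<bar>Z x\<bar> \<partial>M) \<le> sqrt (\<integral>x. (Z x)\<^sup>2 \<partial>M)"
proof -
  interpret prob_space M by fact
  have iZ: "integrable M Z" using square_integrable_imp_integrable[OF Z Z2] .
  have "variance (\<lambda>x. \<bar>Z x\<bar>) = expectation (\<lambda>x. (\<bar>Z x\<bar>)\<^sup>2) - (expectation (\<lambda>x. \<bar>Z x\<bar>))\<^sup>2"
    by (rule variance_eq) (use iZ Z2 in auto)
  then have "(expectation (\<lambda>x. \<bar>Z x\<bar>))\<^sup>2 \<le> expectation (\<lambda>x. (Z x)\<^sup>2)"
    using variance_positive[of "\<lambda>x. \<bar>Z x\<bar>"] by simp
  then show ?thesis by (rule real_le_rsqrt)
qed

lemma L2D:
  assumes "prob_space M" "X \<in> L2 M"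
  shows "X \<in> borel_measurable M" "integrable M X" "integrable M (\<lambda>x. (X x)\<^sup>2)"
proof -
  interpret prob_space M by fact
  show "X \<in> borel_measurable M" "integrable M (\<lambda>x. (X x)\<^sup>2)" using assms(2) by (auto simp: L2_def)
  then show "integrable M X" by (rule square_integrable_imp_integrable)
qed

theorem theorem1:
  fixes M :: "'a measure" and n :: nat
  assumes "prob_space M" and "n \<ge> 1"
  shows "(\<forall>C::real. maxvar n M (\<lambda>_. C) = C)
    \<and> (\<forall>X\<in>L2 M. \<forall>Y\<in>L2 M. \<forall>t::real. 0 \<le> t \<and> t \<le> 1 \<longrightarrow>
          maxvar n M (\<lambda>\<omega>. t * X \<omega> + (1 - t) * Y \<omega>)
            \<le> t * maxvar n M X + (1 - t) * maxvar n M Y)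
    \<and> (\<forall>X\<in>L2 M. \<forall>Y\<in>L2 M. (AE \<omega> in M. X \<omega> \<le> Y \<omega>) \<longrightarrow> maxvar n M X \<le> maxvar n M Y)
    \<and> (\<forall>Xs X. (\<forall>k. Xs k \<in> L2 M) \<and> X \<in> L2 M
          \<and> (\<lambda>k. L2_norm M (\<lambda>\<omega>. Xs k \<omega> - X \<omega>)) \<longlonglongrightarrow> 0
          \<and> (\<forall>k. maxvar n M (Xs k) \<le> 0) \<longrightarrow> maxvar n M X \<le> 0)
    \<and> (\<forall>X\<in>L2 M. \<forall>t::real. t > 0 \<longrightarrow> maxvar n M (\<lambda>\<omega>. t * X \<omega>) = t * maxvar n M X)"
proof -
  note M = assms(1)
  interpret prob_space M by fact
  define P where "P = PiM {..<n} (\<lambda>_. M)"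
  have pP: "prob_space P" unfolding P_def by (intro prob_space_PiM M)
  have ne: "{..<n} \<noteq> {}" "finite {..<n}" using assms(2) by (auto simp: lessThan_empty_iff)
  have mv: "maxvar n M X = (\<integral>\<omega>. Max ((\<lambda>i. X (\<omega> i)) ` {..<n}) \<partial>P)"
    if "X \<in> borel_measurable M" for X
    unfolding P_def by (rule maxvar_eq[OF M that])
  have mi: "integrable P (\<lambda>\<omega>. Max ((\<lambda>i. X (\<omega> i)) ` {..<n}))"
    if "X \<in> borel_measurable M" "integrable M X" for X :: "'a \<Rightarrow> real"
    unfolding P_def by (rule max_int[OF M assms(2) that])
  have A1: "\<forall>C::real. maxvar n M (\<lambda>_. C) = C"
  proof
    fix C :: real
    have "maxvar n M (\<lambda>_. C) = (\<integral>\<omega>. C \<partial>P)"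
      using mv[of "\<lambda>_. C"] ne by simp
    also have "\<dots> = C" using prob_space.prob_space[OF pP] by simp
    finally show "maxvar n M (\<lambda>_. C) = C" .
  qed
  have A2: "\<forall>X\<in>L2 M. \<forall>Y\<in>L2 M. \<forall>t::real. 0 \<le> t \<and> t \<le> 1 \<longrightarrow>
          maxvar n M (\<lambda>\<omega>. t * X \<omega> + (1 - t) * Y \<omega>)
            \<le> t * maxvar n M X + (1 - t) * maxvar n M Y"
  proof (intro ballI allI impI)
    fix X Y and t :: real assume X: "X \<in> L2 M" and Y: "Y \<in> L2 M" and t: "0 \<le> t \<and> t \<le> 1"
    note Xm[measurable] = L2D(1)[OF M X] and Ym[measurable] = L2D(1)[OF M Y]
    note Xi = L2D(2)[OF M X] and Yi = L2D(2)[OF M Y]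
    have Zm: "(\<lambda>\<omega>. t * X \<omega> + (1 - t) * Y \<omega>) \<in> borel_measurable M" by measurable
    have Zi: "integrable M (\<lambda>\<omega>. t * X \<omega> + (1 - t) * Y \<omega>)" using Xi Yi by auto
    have "maxvar n M (\<lambda>\<omega>. t * X \<omega> + (1 - t) * Y \<omega>)
        = (\<integral>\<omega>. Max ((\<lambda>i. t * X (\<omega> i) + (1 - t) * Y (\<omega> i)) ` {..<n}) \<partial>P)"
      using mv[OF Zm] by simp
    also have "\<dots> \<le> (\<integral>\<omega>. t * Max ((\<lambda>i. X (\<omega> i)) ` {..<n}) + (1 - t) * Max ((\<lambda>i. Y (\<omega> i)) ` {..<n}) \<partial>P)"
    proof (rule integral_mono)
      show "integrable P (\<lambda>\<omega>. Max ((\<lambda>i. t * X (\<omega> i) + (1 - t) * Y (\<omega> i)) ` {..<n}))"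
        using mi[OF Zm Zi] by simp
      show "integrable P (\<lambda>\<omega>. t * Max ((\<lambda>i. X (\<omega> i)) ` {..<n}) + (1 - t) * Max ((\<lambda>i. Y (\<omega> i)) ` {..<n}))"
        using mi[OF Xm Xi] mi[OF Ym Yi] by auto
      fix \<omega> show "Max ((\<lambda>i. t * X (\<omega> i) + (1 - t) * Y (\<omega> i)) ` {..<n})
          \<le> t * Max ((\<lambda>i. X (\<omega> i)) ` {..<n}) + (1 - t) * Max ((\<lambda>i. Y (\<omega> i)) ` {..<n})"
        using max_conv[OF ne(2) ne(1), of t "\<lambda>i. X (\<omega> i)" "\<lambda>i. Y (\<omega> i)"] t by simp
    qed
    also have "\<dots> = t * maxvar n M X + (1 - t) * maxvar n M Y"
      using mi[OF Xm Xi] mi[OF Ym Yi] mv[OF Xm] mv[OF Ym] by simp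
    finally show "maxvar n M (\<lambda>\<omega>. t * X \<omega> + (1 - t) * Y \<omega>) \<le> t * maxvar n M X + (1 - t) * maxvar n M Y" .
  qed
  have A3: "\<forall>X\<in>L2 M. \<forall>Y\<in>L2 M. (AE \<omega> in M. X \<omega> \<le> Y \<omega>) \<longrightarrow> maxvar n M X \<le> maxvar n M Y"
  proof (intro ballI impI)
    fix X Y assume X: "X \<in> L2 M" and Y: "Y \<in> L2 M" and le: "AE \<omega> in M. X \<omega> \<le> Y \<omega>"
    note Xm[measurable] = L2D(1)[OF M X] and Ym[measurable] = L2D(1)[OF M Y]
    note Xi = L2D(2)[OF M X] and Yi = L2D(2)[OF M Y]
    have "AE \<omega> in P. \<forall>i\<in>{..<n}. X (\<omega> i) \<le> Y (\<omega> i)"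
      unfolding P_def
      by (intro eventually_ball_finite ballI AE_PiM_component[where P="\<lambda>x. X x \<le> Y x"] M le) auto
    then have "AE \<omega> in P. Max ((\<lambda>i. X (\<omega> i)) ` {..<n}) \<le> Max ((\<lambda>i. Y (\<omega> i)) ` {..<n})"
      by eventually_elim (intro max_mono' ne, auto)
    then have "(\<integral>\<omega>. Max ((\<lambda>i. X (\<omega> i)) ` {..<n}) \<partial>P) \<le> (\<integral>\<omega>. Max ((\<lambda>i. Y (\<omega> i)) ` {..<n}) \<partial>P)"
      using mi[OF Xm Xi] mi[OF Ym Yi] by (intro integral_mono_AE) auto
    then show "maxvar n M X \<le> maxvar n M Y" using mv[OF Xm] mv[OF Ym] by simp
  qed
  have A4: "\<forall>Xs X. (\<forall>k. Xs k \<in> L2 M) \<and> X \<in> L2 M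
          \<and> (\<lambda>k. L2_norm M (\<lambda>\<omega>. Xs k \<omega> - X \<omega>)) \<longlonglongrightarrow> 0
          \<and> (\<forall>k. maxvar n M (Xs k) \<le> 0) \<longrightarrow> maxvar n M X \<le> 0"
  proof (intro allI impI)
    fix Xs X assume h: "(\<forall>k. Xs k \<in> L2 M) \<and> X \<in> L2 M
          \<and> (\<lambda>k. L2_norm M (\<lambda>\<omega>. Xs k \<omega> - X \<omega>)) \<longlonglongrightarrow> 0
          \<and> (\<forall>k. maxvar n M (Xs k) \<le> 0)"
    then have X: "X \<in> L2 M" and lim: "(\<lambda>k. L2_norm M (\<lambda>\<omega>. Xs k \<omega> - X \<omega>)) \<longlonglongrightarrow> 0" by auto
    note Xm[measurable] = L2D(1)[OF M X]
    note Xi = L2D(2)[OF M X] and X2 = L2D(3)[OF M X]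
    have bound: "maxvar n M X \<le> real n * L2_norm M (\<lambda>\<omega>. Xs k \<omega> - X \<omega>)" for k
    proof -
      have K: "Xs k \<in> L2 M" using h by auto
      note Km[measurable] = L2D(1)[OF M K]
      note Ki = L2D(2)[OF M K] and K2 = L2D(3)[OF M K]
      have Dm: "(\<lambda>\<omega>. Xs k \<omega> - X \<omega>) \<in> borel_measurable M" by measurable
      have D2: "integrable M (\<lambda>\<omega>. (Xs k \<omega> - X \<omega>)\<^sup>2)"
      proof (rule Bochner_Integration.integrable_bound)
        show "integrable M (\<lambda>\<omega>. 2 * (Xs k \<omega>)\<^sup>2 + 2 * (X \<omega>)\<^sup>2)" using K2 X2 by auto
        show "(\<lambda>\<omega>. (Xs k \<omega> - X \<omega>)\<^sup>2) \<in> borel_measurable M" by measurable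
        show "AE \<omega> in M. norm ((Xs k \<omega> - X \<omega>)\<^sup>2) \<le> norm (2 * (Xs k \<omega>)\<^sup>2 + 2 * (X \<omega>)\<^sup>2)"
        proof (intro AE_I2)
          fix \<omega>
          have "(Xs k \<omega> - X \<omega>)\<^sup>2 \<le> 2 * (Xs k \<omega>)\<^sup>2 + 2 * (X \<omega>)\<^sup>2"
            using sum_squares_ge_zero[of "Xs k \<omega> + X \<omega>" 0] by (simp add: power2_eq_square algebra_simps)
          then show "norm ((Xs k \<omega> - X \<omega>)\<^sup>2) \<le> norm (2 * (Xs k \<omega>)\<^sup>2 + 2 * (X \<omega>)\<^sup>2)" by simp
        qed
      qed
      have Da: "integrable M (\<lambda>\<omega>. \<bar>Xs k \<omega> - X \<omega>\<bar>)" using Ki Xi by auto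
      have Si: "integrable P (\<lambda>\<omega>. \<Sum>i<n. \<bar>Xs k (\<omega> i) - X (\<omega> i)\<bar>)"
      proof (rule Bochner_Integration.integrable_sum)
        fix i assume "i \<in> {..<n}"
        then show "integrable P (\<lambda>\<omega>. \<bar>Xs k (\<omega> i) - X (\<omega> i)\<bar>)"
          using comp_int(1)[OF M, of i n "\<lambda>x. \<bar>Xs k x - X x\<bar>"] Da unfolding P_def by auto
      qed
      have "maxvar n M X - maxvar n M (Xs k)
          = (\<integral>\<omega>. Max ((\<lambda>i. X (\<omega> i)) ` {..<n}) - Max ((\<lambda>i. Xs k (\<omega> i)) ` {..<n}) \<partial>P)"
        using mv[OF Xm] mv[OF Km] mi[OF Xm Xi] mi[OF Km Ki] by simp
      also have "\<dots> \<le> (\<integral>\<omega>. (\<Sum>i<n. \<bar>Xs k (\<omega> i) - X (\<omega> i)\<bar>) \<partial>P)"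
      proof (rule integral_mono)
        show "integrable P (\<lambda>\<omega>. Max ((\<lambda>i. X (\<omega> i)) ` {..<n}) - Max ((\<lambda>i. Xs k (\<omega> i)) ` {..<n}))"
          using mi[OF Xm Xi] mi[OF Km Ki] by auto
        show "integrable P (\<lambda>\<omega>. \<Sum>i<n. \<bar>Xs k (\<omega> i) - X (\<omega> i)\<bar>)" by (rule Si)
        fix \<omega> show "Max ((\<lambda>i. X (\<omega> i)) ` {..<n}) - Max ((\<lambda>i. Xs k (\<omega> i)) ` {..<n})
            \<le> (\<Sum>i<n. \<bar>Xs k (\<omega> i) - X (\<omega> i)\<bar>)"
          using max_diff[OF ne(2) ne(1), of "\<lambda>i. X (\<omega> i)" "\<lambda>i. Xs k (\<omega> i)"] by simp
      qed
      also have "\<dots> = (\<Sum>i<n. (\<integral>\<omega>. \<bar>Xs k (\<omega> i) - X (\<omega> i)\<bar> \<partial>P))"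
      proof (rule Bochner_Integration.integral_sum)
        fix i assume "i \<in> {..<n}"
        then show "integrable P (\<lambda>\<omega>. \<bar>Xs k (\<omega> i) - X (\<omega> i)\<bar>)"
          using comp_int(1)[OF M, of i n "\<lambda>x. \<bar>Xs k x - X x\<bar>"] Da unfolding P_def by auto
      qed
      also have "\<dots> = (\<Sum>i<n. (\<integral>\<omega>. \<bar>Xs k \<omega> - X \<omega>\<bar> \<partial>M))"
      proof (rule sum.cong)
        fix i assume "i \<in> {..<n}"
        then show "(\<integral>\<omega>. \<bar>Xs k (\<omega> i) - X (\<omega> i)\<bar> \<partial>P) = (\<integral>\<omega>. \<bar>Xs k \<omega> - X \<omega>\<bar> \<partial>M)"
          using comp_int(2)[OF M, of i n "\<lambda>x. \<bar>Xs k x - X x\<bar>"] unfolding P_def by auto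
      qed simp
      also have "\<dots> = real n * (\<integral>\<omega>. \<bar>Xs k \<omega> - X \<omega>\<bar> \<partial>M)" by simp
      also have "\<dots> \<le> real n * L2_norm M (\<lambda>\<omega>. Xs k \<omega> - X \<omega>)"
        unfolding L2_norm_def
        by (intro mult_left_mono abs_le_sqrt[OF M Dm D2]) auto
      finally show ?thesis using h by (smt (verit))
    qed
    have "(\<lambda>k. real n * L2_norm M (\<lambda>\<omega>. Xs k \<omega> - X \<omega>)) \<longlonglongrightarrow> real n * 0"
      by (intro tendsto_mult tendsto_const lim)
    then show "maxvar n M X \<le> 0"
      using bound by (intro LIMSEQ_le_const[where X="\<lambda>k. real n * L2_norm M (\<lambda>\<omega>. Xs k \<omega> - X \<omega>)"]) auto
  qed
  have A5: "\<forall>X\<in>L2 M. \<forall>t::real. t > 0 \<longrightarrow> maxvar n M (\<lambda>\<omega>. t * X \<omega>) = t * maxvar n M X"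
  proof (intro ballI allI impI)
    fix X and t :: real assume X: "X \<in> L2 M" and t: "t > 0"
    note Xm[measurable] = L2D(1)[OF M X]
    have Zm: "(\<lambda>\<omega>. t * X \<omega>) \<in> borel_measurable M" by measurable
    have mono: "mono ((*) t)" using t by (intro monoI mult_left_mono) auto
    have "Max ((\<lambda>i. t * X (\<omega> i)) ` {..<n}) = t * Max ((\<lambda>i. X (\<omega> i)) ` {..<n})" for \<omega>
      using mono_Max_commute[OF mono, of "(\<lambda>i. X (\<omega> i)) ` {..<n}"] ne by (simp add: image_image)
    then show "maxvar n M (\<lambda>\<omega>. t * X \<omega>) = t * maxvar n M X"
      using mv[OF Zm] mv[OF Xm] by simp
  qed
  show ?thesis using A1 A2 A3 A4 A5 by blast
qed

end
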